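(* For every $n\ge 6$, the diameter of the skeleton of $\mathrm{PYR}(n)$ equals $2$.
   Context: Let $K_n$ be the complete undirected graph on vertex set $\{1,\dots,n\}$ with edge set $E$. A Hamiltonian cycle $\langle 1,i_1,\dots,i_r,n,j_1,\dots,j_{n-r-2}\rangle$ is called a pyramidal tour if $i_1<i_2<\dots<i_r$ and $j_1>j_2>\dots>j_{n-r-2}$; tours are undirected. Let $PT_n$ be the set of all pyramidal tours. For $x\in PT_n$ its characteristic vector $x^v\in\mathbb{R}^E$ has $x^v_e=1$ if edge $e$ lies in $x$ and $0$ otherwise. The pyramidal tours polytope is $\mathrm{PYR}(n)=\operatorname{conv}\{x^v : x\in PT_n\}$. The skeleton ($1$-skeleton) of a polytope is the graph whose vertices are the polytope's vertices and whose edges are its one-dimensional faces. The diameter of a graph is the maximum, over pairs of vertices, of the edge distance between them. *)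

theory Defs
  imports "HOL-Analysis.Analysis" "HOL-Library.Extended_Nat"
begin

text \<open>Vertices of K_n: a finite linearly ordered type 'n (order = labelling 1..n).
  Edge space R^E is represented (linear injective embedding) inside real^('n\<times>'n):
  an undirected edge {i,j} contributes to both coordinates (i,j) and (j,i).\<close>

definition pyr_cycle :: "'n::{finite,linorder} set \<Rightarrow> 'n list" where
  "pyr_cycle A = [Min UNIV] @ sorted_list_of_set A @ [Max UNIV]
     @ rev (sorted_list_of_set (UNIV - A - {Min UNIV, Max UNIV}))"

definition cycle_edges :: "'a list \<Rightarrow> 'a set set" where
  "cycle_edges xs = {{xs ! i, xs ! ((Suc i) mod length xs)} | i. i < length xs}"

definition pyramidal_tours :: "'n::{finite,linorder} set set set" where
  "pyramidal_tours = {cycle_edges (pyr_cycle A) | A. A \<subseteq> UNIV - {Min UNIV, Max UNIV}}"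

definition char_vec :: "'n::{finite,linorder} set set \<Rightarrow> real ^ ('n \<times> 'n)" where
  "char_vec T = (\<chi> e. if {fst e, snd e} \<in> T then 1 else 0)"

definition PYR :: "(real ^ ('n::{finite,linorder} \<times> 'n)) set" where
  "PYR = convex hull (char_vec ` pyramidal_tours)"

definition skel_vertices :: "'a::euclidean_space set \<Rightarrow> 'a set" where
  "skel_vertices P = {v. v extreme_point_of P}"

definition skel_adj :: "'a::euclidean_space set \<Rightarrow> 'a \<Rightarrow> 'a \<Rightarrow> bool" where
  "skel_adj P u v \<longleftrightarrow> u \<noteq> v \<and> u \<in> skel_vertices P \<and> v \<in> skel_vertices P \<and>
     (\<exists>F. F face_of P \<and> aff_dim F = 1 \<and> u \<in> F \<and> v \<in> F)"

text \<open>Graph distance (infinity if no path) and diameter.\<close>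
definition graph_dist :: "'a set \<Rightarrow> ('a \<Rightarrow> 'a \<Rightarrow> bool) \<Rightarrow> 'a \<Rightarrow> 'a \<Rightarrow> enat" where
  "graph_dist V adj u v = (INF k \<in> {k. \<exists>p. length p = Suc k \<and> hd p = u \<and> last p = v \<and>
      set p \<subseteq> V \<and> (\<forall>i<k. adj (p ! i) (p ! Suc i))}. enat k)"

definition graph_diameter :: "'a set \<Rightarrow> ('a \<Rightarrow> 'a \<Rightarrow> bool) \<Rightarrow> enat" where
  "graph_diameter V adj = (SUP u \<in> V. SUP v \<in> V. graph_dist V adj u v)"

end

theory Submission
  imports Defs
begin
definition consec :: "'a::linorder set \<Rightarrow> 'a \<Rightarrow> 'a \<Rightarrow> bool" where
  "consec S x y \<longleftrightarrow> x \<in> S \<and> y \<in> S \<and> x < y \<and> (\<forall>t\<in>S. \<not> (x < t \<and> t < y))"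

definition cedges :: "'a::linorder set \<Rightarrow> 'a set set" where
  "cedges S = {{x,y} | x y. consec S x y}"

fun pe :: "'a list \<Rightarrow> 'a set set" where
  "pe (x#y#ys) = insert {x,y} (pe (y#ys))"
| "pe _ = {}"

lemma consec_insert_min:
  assumes "\<forall>t\<in>set (y#ys). x < t" "sorted_wrt (<) (y#ys)"
  shows "consec (insert x (set (y#ys))) a b \<longleftrightarrow> (a = x \<and> b = y) \<or> consec (set (y#ys)) a b"
proof
  assume c: "consec (insert x (set (y#ys))) a b"
  show "(a = x \<and> b = y) \<or> consec (set (y#ys)) a b"
  proof (cases "a = x")
    case True
    have "b \<in> set (y#ys)" using c True unfolding consec_def by auto
    then have "y \<le> b" using assms(2) by (auto simp: order.strict_implies_order)
    moreover have "\<not> (y < b)" using c True assms(1) unfolding consec_def by auto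
    ultimately show ?thesis using True by auto
  next
    case False
    then have "a \<in> set (y#ys)" using c unfolding consec_def by auto
    then have "x < a" using assms(1) by auto
    then have "b \<noteq> x" using c unfolding consec_def by auto
    then show ?thesis using c False unfolding consec_def by auto
  qed
next
  assume "(a = x \<and> b = y) \<or> consec (set (y#ys)) a b"
  then show "consec (insert x (set (y#ys))) a b"
  proof
    assume ab: "a = x \<and> b = y"
    have "\<forall>t\<in>set ys. y < t" using assms(2) by auto
    then show ?thesis using ab assms(1) unfolding consec_def by auto
  next
    assume c: "consec (set (y#ys)) a b"
    then have "a \<in> set (y#ys)" unfolding consec_def by auto
    then have "x < a" using assms(1) by auto
    then show ?thesis using c unfolding consec_def by auto
  qed
qed

lemma pe_sorted: "sorted_wrt (<) xs \<Longrightarrow> pe xs = cedges (set xs)"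
proof (induction xs rule: pe.induct)
  case (1 x y ys)
  have mn: "\<forall>t\<in>set (y#ys). x < t" using 1(2) by auto
  have s: "sorted_wrt (<) (y#ys)" using 1(2) by auto
  have "cedges (set (x#y#ys)) = insert {x,y} (cedges (set (y#ys)))"
    unfolding cedges_def using consec_insert_min[OF mn s] by auto
  then show ?case using 1 s by simp
next
  case ("2_1")
  then show ?case by (auto simp: cedges_def consec_def)
next
  case ("2_2" v)
  then show ?case by (auto simp: cedges_def consec_def)
qed

lemma pe_append: "pe (xs @ y # ys) = pe (xs @ [y]) \<union> pe (y # ys)"
proof (induction xs)
  case Nil then show ?case by simp
next
  case (Cons a xs)
  then show ?case by (cases xs) auto
qed

lemma pe_rev: "pe (rev xs) = pe xs"
proof (induction xs rule: pe.induct)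
  case (1 x y ys)
  have "pe (rev (x#y#ys)) = pe (rev ys @ [y] @ [x])" by simp
  also have "\<dots> = pe (rev ys @ [y]) \<union> pe [y,x]" using pe_append[of "rev ys" y "[x]"] by simp
  also have "\<dots> = insert {x,y} (pe (y#ys))" using 1 by (auto simp: insert_commute)
  finally show ?case by simp
qed auto

lemma pe_nth: "pe ys = {{ys!i, ys!Suc i} | i. Suc i < length ys}"
proof (induction ys rule: pe.induct)
  case (1 x y ys)
  show ?case
  proof (rule set_eqI, rule iffI)
    fix e assume "e \<in> pe (x#y#ys)"
    then have "e = {x,y} \<or> e \<in> pe (y#ys)" by simp
    then show "e \<in> {{(x#y#ys)!i, (x#y#ys)!Suc i} | i. Suc i < length (x#y#ys)}"
    proof
      assume "e = {x,y}" then show ?thesis by (intro CollectI exI[of _ 0]) auto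
    next
      assume "e \<in> pe (y#ys)"
      then obtain i where "e = {(y#ys)!i, (y#ys)!Suc i}" "Suc i < length (y#ys)" using 1 by auto
      then show ?thesis by (intro CollectI exI[of _ "Suc i"]) auto
    qed
  next
    fix e assume "e \<in> {{(x#y#ys)!i, (x#y#ys)!Suc i} | i. Suc i < length (x#y#ys)}"
    then obtain i where i: "e = {(x#y#ys)!i, (x#y#ys)!Suc i}" "Suc i < length (x#y#ys)" by auto
    show "e \<in> pe (x#y#ys)"
    proof (cases i)
      case 0 then show ?thesis using i by simp
    next
      case (Suc j) then show ?thesis using i 1 by auto
    qed
  qed
qed auto

lemma cycle_pe: assumes "xs \<noteq> []" shows "cycle_edges xs = pe (xs @ [hd xs])"
proof -
  have "pe (xs @ [hd xs]) = {{(xs @ [hd xs])!i, (xs @ [hd xs])!Suc i} | i. Suc i < length (xs @ [hd xs])}"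
    by (rule pe_nth)
  also have "\<dots> = {{xs ! i, xs ! ((Suc i) mod length xs)} | i. i < length xs}"
  proof -
    have "\<And>i. i < length xs \<Longrightarrow> (xs @ [hd xs])!i = xs!i" by (simp add: nth_append)
    moreover have "\<And>i. i < length xs \<Longrightarrow> (xs @ [hd xs])!Suc i = xs ! ((Suc i) mod length xs)"
    proof -
      fix i assume i: "i < length xs"
      show "(xs @ [hd xs])!Suc i = xs ! ((Suc i) mod length xs)"
      proof (cases "Suc i < length xs")
        case True then show ?thesis by (simp add: nth_append)
      next
        case False
        then have "Suc i = length xs" using i by simp
        then show ?thesis using assms by (simp add: nth_append hd_conv_nth)
      qed
    qed
    ultimately show ?thesis by auto (metis Suc_less_eq)+
  qed
  finally show ?thesis unfolding cycle_edges_def by simp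
qed

abbreviation mn :: "'n::{finite,linorder}" where "mn \<equiv> Min UNIV"
abbreviation mx :: "'n::{finite,linorder}" where "mx \<equiv> Max UNIV"

definition EA :: "'n::{finite,linorder} set \<Rightarrow> 'n set set" where
  "EA A = cedges (A \<union> {mn, mx}) \<union> cedges (- A)"

lemma mn_le[simp]: "mn \<le> (t::'n::{finite,linorder})" by simp
lemma mx_ge[simp]: "(t::'n::{finite,linorder}) \<le> mx" by simp

lemma tour_EA:
  assumes A: "A \<subseteq> UNIV - {mn, mx::'n::{finite,linorder}}" and mm: "mn < (mx::'n)"
  shows "cycle_edges (pyr_cycle A) = EA A"
proof -
  define sA where "sA = sorted_list_of_set A"
  define sB where "sB = sorted_list_of_set (UNIV - A - {mn,mx::'n})"
  have setA: "set sA = A" unfolding sA_def by simp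
  have setB: "set sB = UNIV - A - {mn,mx}" unfolding sB_def by simp
  have sa: "sorted_wrt (<) sA" unfolding sA_def by (rule strict_sorted_list_of_set)
  have sb: "sorted_wrt (<) sB" unfolding sB_def by (rule strict_sorted_list_of_set)
  have lt1: "\<And>t. t \<noteq> mn \<Longrightarrow> mn < (t::'n)" using mn_le order_le_neq_trans by metis
  have lt2: "\<And>t. t \<noteq> mx \<Longrightarrow> t < (mx::'n)" using mx_ge order_le_neq_trans by metis
  have pc: "pyr_cycle A = mn # sA @ [mx] @ rev sB"
    unfolding pyr_cycle_def sA_def sB_def by simp
  have "pyr_cycle A @ [hd (pyr_cycle A)] = (mn # sA) @ mx # (rev sB @ [mn])"
    using pc by simp
  then have "cycle_edges (pyr_cycle A) = pe ((mn # sA) @ [mx]) \<union> pe (mx # rev sB @ [mn])"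
    using cycle_pe[of "pyr_cycle A"] pe_append[of "mn # sA" mx "rev sB @ [mn]"] pc by simp
  also have "pe (mx # rev sB @ [mn]) = pe (mn # sB @ [mx])"
    using pe_rev[of "mn # sB @ [mx]"] by simp
  also have "pe ((mn # sA) @ [mx]) = cedges (A \<union> {mn,mx})"
  proof -
    have "sorted_wrt (<) ((mn # sA) @ [mx])"
      using sa setA A lt1 lt2 mm by (auto simp: sorted_wrt_append)
    moreover have "set ((mn # sA) @ [mx]) = A \<union> {mn,mx}" using setA by auto
    ultimately show ?thesis using pe_sorted by metis
  qed
  also have "pe (mn # sB @ [mx]) = cedges (- A)"
  proof -
    have "sorted_wrt (<) (mn # sB @ [mx])"
      using sb setB lt1 lt2 mm by (auto simp: sorted_wrt_append)
    moreover have "set (mn # sB @ [mx]) = - A" using setB A by auto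
    ultimately show ?thesis using pe_sorted by metis
  qed
  finally show ?thesis unfolding EA_def .
qed

lemma tours_eq:
  assumes "mn < (mx::'n::{finite,linorder})"
  shows "(pyramidal_tours :: 'n set set set) = EA ` {A. A \<subseteq> UNIV - {mn, mx}}"
  unfolding pyramidal_tours_def using tour_EA[OF _ assms] by auto

lemma consec_lower_uniq: "consec S a v \<Longrightarrow> consec S b v \<Longrightarrow> a = b"
  unfolding consec_def by (meson linorder_neqE)
lemma consec_upper_uniq: "consec S v a \<Longrightarrow> consec S v b \<Longrightarrow> a = b"
  unfolding consec_def by (meson linorder_neqE)

lemma consec_exists_lower:
  fixes S :: "'a::linorder set"
  assumes "finite S" "v \<in> S" "s \<in> S" "s < v"
  shows "\<exists>a. consec S a v"
proof -
  let ?T = "{t\<in>S. t < v}"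
  have ne: "?T \<noteq> {}" using assms by auto
  have f: "finite ?T" using assms by auto
  define a where "a = Max ?T"
  have "a \<in> ?T" unfolding a_def using Max_in[OF f ne] .
  moreover have "\<And>t. t \<in> ?T \<Longrightarrow> t \<le> a" unfolding a_def using Max_ge[OF f] by auto
  ultimately have "consec S a v" using assms unfolding consec_def by force
  then show ?thesis by blast
qed

lemma consec_exists_upper:
  fixes S :: "'a::linorder set"
  assumes "finite S" "v \<in> S" "s \<in> S" "v < s"
  shows "\<exists>a. consec S v a"
proof -
  let ?T = "{t\<in>S. v < t}"
  have ne: "?T \<noteq> {}" using assms by auto
  have f: "finite ?T" using assms by auto
  define a where "a = Min ?T"
  have "a \<in> ?T" unfolding a_def using Min_in[OF f ne] .
  moreover have "\<And>t. t \<in> ?T \<Longrightarrow> a \<le> t" unfolding a_def using Min_le[OF f] by auto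
  ultimately have "consec S v a" using assms unfolding consec_def by force
  then show ?thesis by blast
qed

lemma consec_sub: "consec UNIV i j \<Longrightarrow> i \<in> S \<Longrightarrow> j \<in> S \<Longrightarrow> consec S i j"
  unfolding consec_def by auto

lemma mem_EA:
  fixes u v :: "'n::{finite,linorder}"
  assumes "{u,v} \<in> EA A" "u < v"
  shows "consec (A \<union> {mn,mx}) u v \<or> consec (- A) u v"
proof -
  obtain x y where "{u,v} = {x,y}" "consec (A \<union> {mn,mx}) x y \<or> consec (- A) x y"
    using assms(1) unfolding EA_def cedges_def by auto
  moreover then have "x < y" unfolding consec_def by auto
  ultimately have "x = u" "y = v" using assms(2) by (auto simp: doubleton_eq_iff)
  then show ?thesis using \<open>consec _ x y \<or> _\<close> by simp
qed

lemma EA_edge: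
  fixes A :: "'n::{finite,linorder} set"
  assumes "e \<in> EA A" obtains u v where "e = {u,v}" "u < v"
  using assms unfolding EA_def cedges_def consec_def by auto

lemma EA_memI1: "consec (A \<union> {mn,mx}) u v \<Longrightarrow> {u,v} \<in> EA A"
  unfolding EA_def cedges_def by auto
lemma EA_memI2: "consec (- A) u v \<Longrightarrow> {u,v} \<in> EA A"
  unfolding EA_def cedges_def by auto

lemma mem_EA': "{u,v} \<in> EA A \<Longrightarrow> u < v \<Longrightarrow> (\<exists>S\<in>{A \<union> {mn,mx}, - A}. consec S u v)"
  using mem_EA by blast

locale pyr =
  fixes dummy :: "'n::{finite,linorder}"
  assumes three: "\<exists>t::'n. mn < t \<and> t < mx"
begin

lemma mm: "mn < (mx::'n)" using three by auto

lemma lt1: "t \<noteq> mn \<Longrightarrow> mn < (t::'n)" using mn_le order_le_neq_trans by metis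
lemma lt2: "t \<noteq> mx \<Longrightarrow> t < (mx::'n)" using mx_ge order_le_neq_trans by metis

lemma F1:
  fixes A :: "'n set"
  assumes A: "A \<subseteq> UNIV - {mn,mx}" and v: "v \<noteq> mn" "v \<noteq> mx"
    and e: "{a,v} \<in> EA A" "{b,v} \<in> EA A" "a < v" "b < v"
  shows "a = b"
proof -
  have 1: "consec (A \<union> {mn,mx}) a v \<or> consec (- A) a v" using mem_EA e by blast
  have 2: "consec (A \<union> {mn,mx}) b v \<or> consec (- A) b v" using mem_EA e by blast
  show ?thesis
  proof (cases "v \<in> A")
    case True
    then have "consec (A \<union> {mn,mx}) a v" "consec (A \<union> {mn,mx}) b v"
      using 1 2 unfolding consec_def by auto
    then show ?thesis by (rule consec_lower_uniq)
  next
    case False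
    then have "consec (- A) a v" "consec (- A) b v"
      using 1 2 v unfolding consec_def by auto
    then show ?thesis by (rule consec_lower_uniq)
  qed
qed

lemma F2:
  fixes A :: "'n set"
  assumes A: "A \<subseteq> UNIV - {mn,mx}" and v: "v \<noteq> mn" "v \<noteq> mx"
    and e: "{v,a} \<in> EA A" "{v,b} \<in> EA A" "v < a" "v < b"
  shows "a = b"
proof -
  have 1: "consec (A \<union> {mn,mx}) v a \<or> consec (- A) v a" using mem_EA e by blast
  have 2: "consec (A \<union> {mn,mx}) v b \<or> consec (- A) v b" using mem_EA e by blast
  show ?thesis
  proof (cases "v \<in> A")
    case True
    then have "consec (A \<union> {mn,mx}) v a" "consec (A \<union> {mn,mx}) v b"
      using 1 2 unfolding consec_def by auto
    then show ?thesis by (rule consec_upper_uniq)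
  next
    case False
    then have "consec (- A) v a" "consec (- A) v b"
      using 1 2 v unfolding consec_def by auto
    then show ?thesis by (rule consec_upper_uniq)
  qed
qed

lemma F3:
  fixes A :: "'n set"
  assumes A: "A \<subseteq> UNIV - {mn,mx}" and v: "v \<noteq> mn"
  shows "\<exists>a<v. {a,v} \<in> EA A"
proof (cases "v \<in> A")
  case True
  then obtain a where "consec (A \<union> {mn,mx}) a v"
    using consec_exists_lower[of "A \<union> {mn,mx}" v mn] lt1[OF v] by auto
  then show ?thesis using EA_memI1 unfolding consec_def by blast
next
  case False
  have "mn \<notin> A" using A by auto
  then obtain a where "consec (- A) a v"
    using consec_exists_lower[of "- A" v mn] lt1[OF v] False by auto
  then show ?thesis using EA_memI2 unfolding consec_def by blast
qed

lemma F3':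
  fixes A :: "'n set"
  assumes A: "A \<subseteq> UNIV - {mn,mx}" and v: "v \<noteq> mx"
  shows "\<exists>a>v. {v,a} \<in> EA A"
proof (cases "v \<in> A")
  case True
  then obtain a where "consec (A \<union> {mn,mx}) v a"
    using consec_exists_upper[of "A \<union> {mn,mx}" v mx] lt2[OF v] by auto
  then show ?thesis using EA_memI1 unfolding consec_def by blast
next
  case False
  have "mx \<notin> A" using A by auto
  then obtain a where "consec (- A) v a"
    using consec_exists_upper[of "- A" v mx] lt2[OF v] False by auto
  then show ?thesis using EA_memI2 unfolding consec_def by blast
qed

lemma F4:
  fixes A :: "'n set"
  assumes A: "A \<subseteq> UNIV - {mn,mx}"
  shows "\<exists>y1 y2. y1 \<noteq> y2 \<and> {mn,y1} \<in> EA A \<and> {mn,y2} \<in> EA A"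
proof -
  have nA: "mn \<notin> A" "mx \<notin> A" using A by auto
  obtain y1 where y1: "consec (A \<union> {mn,mx}) mn y1"
    using consec_exists_upper[of "A \<union> {mn,mx}" mn mx] mm by auto
  obtain y2 where y2: "consec (- A) mn y2"
    using consec_exists_upper[of "- A" mn mx] mm nA by auto
  obtain t :: 'n where t: "mn < t" "t < mx" using three by auto
  have "y1 \<noteq> y2"
  proof
    assume "y1 = y2"
    then have "y1 = mx" using y1 y2 unfolding consec_def by auto
    then show False using y1 y2 t \<open>y1 = y2\<close> unfolding consec_def by (cases "t \<in> A") auto
  qed
  then show ?thesis using EA_memI1[OF y1] EA_memI2[OF y2] by blast
qed

lemma F4':
  fixes A :: "'n set"
  assumes A: "A \<subseteq> UNIV - {mn,mx}"
  shows "\<exists>y1 y2. y1 \<noteq> y2 \<and> y1 < mx \<and> y2 < mx \<and> {y1,mx} \<in> EA A \<and> {y2,mx} \<in> EA A"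
proof -
  have nA: "mn \<notin> A" "mx \<notin> A" using A by auto
  obtain y1 where y1: "consec (A \<union> {mn,mx}) y1 mx"
    using consec_exists_lower[of "A \<union> {mn,mx}" mx mn] mm by auto
  obtain y2 where y2: "consec (- A) y2 mx"
    using consec_exists_lower[of "- A" mx mn] mm nA by auto
  obtain t :: 'n where t: "mn < t" "t < mx" using three by auto
  have "y1 \<noteq> y2"
  proof
    assume "y1 = y2"
    then have "y1 = mn" using y1 y2 unfolding consec_def by auto
    then show False using y1 y2 t \<open>y1 = y2\<close> unfolding consec_def by (cases "t \<in> A") auto
  qed
  moreover have "y1 < mx" "y2 < mx" using y1 y2 unfolding consec_def by auto
  ultimately show ?thesis using EA_memI1[OF y1] EA_memI2[OF y2] by blast
qed

end

context pyr begin

lemma EA_top: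
  fixes C :: "'n set"
  assumes C: "C \<subseteq> UNIV - {mn,mx}" and e: "{mn,mx} \<in> EA C"
  shows "EA C = EA {}"
proof -
  have "consec (C \<union> {mn,mx}) mn mx \<or> consec (- C) mn mx" using mem_EA[OF e mm] .
  then show ?thesis
  proof
    assume c: "consec (C \<union> {mn,mx}) mn mx"
    have "C = {}"
    proof (rule ccontr)
      assume "C \<noteq> {}" then obtain t where "t \<in> C" by auto
      then have "mn < t" "t < mx" using C lt1 lt2 by auto
      then show False using c \<open>t \<in> C\<close> unfolding consec_def by auto
    qed
    then show ?thesis by simp
  next
    assume c: "consec (- C) mn mx"
    have "C = UNIV - {mn,mx}"
    proof (rule ccontr)
      assume "C \<noteq> UNIV - {mn,mx}" then obtain t where "t \<notin> C" "t \<noteq> mn" "t \<noteq> mx" using C by auto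
      then have "mn < t" "t < mx" using lt1 lt2 by auto
      then show False using c \<open>t \<notin> C\<close> unfolding consec_def by auto
    qed
    then have "C \<union> {mn,mx} = UNIV" "- C = {mn,mx}" by auto
    then show ?thesis unfolding EA_def by (simp add: Un_commute)
  qed
qed

lemma EA_empty_mem:
  assumes "e \<in> EA ({}::'n set)"
  shows "e = {mn,mx} \<or> (\<exists>i j. e = {i,j} \<and> consec UNIV i j)"
proof -
  from assms obtain x y where xy: "e = {x,y}" "consec {mn,mx} x y \<or> consec UNIV x y"
    unfolding EA_def cedges_def by auto
  then show ?thesis
  proof (cases "consec {mn,mx} x y")
    case True
    then have "x \<in> {mn,mx}" "y \<in> {mn,mx}" "x < y" unfolding consec_def by auto
    then have "x = mn" "y = mx" using mm by (auto dest: less_asym)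
    then show ?thesis using xy by simp
  qed auto
qed

lemma EA_UNIV_memI: "consec UNIV i j \<Longrightarrow> {i,j} \<in> EA ({}::'n set)"
  unfolding EA_def cedges_def by auto

lemma EA_ne: "{u,u} \<notin> EA (A::'n set)"
  unfolding EA_def cedges_def consec_def by (auto simp: doubleton_eq_iff)

lemma hub_sub:
  fixes A C :: "'n set"
  assumes A: "A \<subseteq> UNIV - {mn,mx}" and C: "C \<subseteq> UNIV - {mn,mx}"
    and lo: "EA A \<inter> EA {} \<subseteq> EA C" and hi: "EA C \<subseteq> EA A \<union> EA {}"
    and top: "{mn,mx} \<notin> EA C"
  shows "EA C \<subseteq> EA A"
proof (rule ccontr)
  assume "\<not> EA C \<subseteq> EA A"
  then obtain e where e: "e \<in> EA C" "e \<notin> EA A" by auto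
  define D where "D = {i. \<exists>j. consec UNIV i j \<and> {i,j} \<in> EA C \<and> {i,j} \<notin> EA A}"
  have "e \<in> EA {}" using e hi by auto
  then obtain i j where "e = {i,j}" "consec UNIV i j" using EA_empty_mem e top by blast
  then have "i \<in> D" unfolding D_def using e by auto
  then have Dne: "D \<noteq> {}" by auto
  define i0 where "i0 = Min D"
  have "i0 \<in> D" unfolding i0_def using Min_in[OF _ Dne] by simp
  then obtain j0 where j0: "consec UNIV i0 j0" "{i0,j0} \<in> EA C" "{i0,j0} \<notin> EA A"
    unfolding D_def by auto
  have minD: "\<And>p. p \<in> D \<Longrightarrow> i0 \<le> p" unfolding i0_def by simp
  define S1 where "S1 = A \<union> {mn,mx}"
  define S2 where "S2 = - A"
  have nS1: "\<not> (i0 \<in> S1 \<and> j0 \<in> S1)"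
    using consec_sub[OF j0(1), of S1] EA_memI1 j0(3) unfolding S1_def by blast
  have nS2: "\<not> (i0 \<in> S2 \<and> j0 \<in> S2)"
    using consec_sub[OF j0(1), of S2] EA_memI2 j0(3) unfolding S2_def by blast
  have ij: "i0 \<noteq> mn" "i0 \<noteq> mx" "j0 \<noteq> mn" "j0 \<noteq> mx"
    using nS1 nS2 unfolding S1_def S2_def by (auto, insert A, auto)
  have i0j0: "i0 < j0" using j0(1) unfolding consec_def by auto
  define Sk where "Sk = (if j0 \<in> A then S1 else S2)"
  define So where "So = (if j0 \<in> A then S2 else S1)"
  have SS: "(consec S1 x y \<or> consec S2 x y) \<longleftrightarrow> (consec Sk x y \<or> consec So x y)" for x y
    unfolding Sk_def So_def by auto
  have j0Sk: "j0 \<in> Sk" and i0So: "i0 \<in> So" and i0Sk: "i0 \<notin> Sk"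
    using nS1 nS2 ij unfolding Sk_def So_def S1_def S2_def by auto
  have mnSk: "mn \<in> Sk" "mn \<in> So" using A unfolding Sk_def So_def S1_def S2_def by auto
  have SkSo: "x \<in> Sk \<or> x \<in> So" for x unfolding Sk_def So_def S1_def S2_def by auto
  have EAk: "consec Sk x y \<Longrightarrow> {x,y} \<in> EA A" for x y
    using EA_memI1 EA_memI2 unfolding Sk_def S1_def S2_def by (auto split: if_splits)
  obtain p where p: "consec Sk p j0"
    using consec_exists_lower[of Sk j0 mn] j0Sk mnSk lt1[OF ij(3)] by auto
  have pA: "{p,j0} \<in> EA A" using EAk[OF p] .
  have "p \<le> i0"
  proof (rule ccontr)
    assume "\<not> p \<le> i0" then have "i0 < p" "p < j0" using p unfolding consec_def by auto
    then show False using j0(1) unfolding consec_def by auto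
  qed
  moreover have "p \<noteq> i0" using p i0Sk unfolding consec_def by auto
  ultimately have pi0: "p < i0" by simp
  have pC: "{p,j0} \<notin> EA C"
  proof
    assume "{p,j0} \<in> EA C"
    then have "p = i0" using F1[OF C ij(3) ij(4) _ j0(2)] pi0 i0j0 by auto
    then show False using pi0 by simp
  qed
  show False
  proof (cases "p = mn")
    case True
    obtain y1 y2 where y: "y1 \<noteq> y2" "{mn,y1} \<in> EA C" "{mn,y2} \<in> EA C" using F4[OF C] by blast
    obtain s :: 'n where s: "consec UNIV mn s" using consec_exists_upper[of UNIV mn i0] lt1[OF ij(1)] by auto
    have "s \<le> i0" using s lt1[OF ij(1)] unfolding consec_def by (metis UNIV_I leI)
    have "s \<notin> Sk"
    proof
      assume "s \<in> Sk"
      moreover have "mn < s" "s < j0" using s \<open>s \<le> i0\<close> i0j0 unfolding consec_def by auto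
      ultimately show False using p True unfolding consec_def by auto
    qed
    then have "s \<in> So" using SkSo by blast
    then have sSo: "consec So mn s" using consec_sub[OF s] mnSk by auto
    have yv: "y = s" if "{mn,y} \<in> EA C" for y
    proof -
      have "y \<noteq> mn" using that EA_ne by auto
      then have ym: "mn < y" using lt1 by auto
      have "y \<noteq> mx" using that top by auto
      have "y \<noteq> j0" using that pC True by auto
      have "{mn,y} \<in> EA A \<or> {mn,y} \<in> EA {}" using that hi by auto
      then show "y = s"
      proof
        assume "{mn,y} \<in> EA A"
        then have "consec Sk mn y \<or> consec So mn y" using mem_EA[of mn y A] ym SS
          unfolding S1_def S2_def by auto
        then show ?thesis using consec_upper_uniq p True sSo \<open>y \<noteq> j0\<close> by blast
      next
        assume "{mn,y} \<in> EA {}"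
        then have "{mn,y} = {mn,mx} \<or> (\<exists>i j. {mn,y} = {i,j} \<and> consec UNIV i j)"
          using EA_empty_mem by blast
        then have "consec UNIV mn y" using \<open>y \<noteq> mx\<close> ym
          by (auto simp: doubleton_eq_iff consec_def)
        then show ?thesis using consec_upper_uniq s by blast
      qed
    qed
    then show False using y by auto
  next
    case False
    have "p \<noteq> mx" using pi0 lt2[OF ij(2)] by auto
    obtain q where q: "p < q" "{p,q} \<in> EA C" using F3'[OF C \<open>p \<noteq> mx\<close>] by auto
    have "{p,q} \<in> EA A \<or> {p,q} \<in> EA {}" using q hi by auto
    then show False
    proof
      assume "{p,q} \<in> EA A"
      then have "q = j0" using F2[OF A False \<open>p \<noteq> mx\<close> _ pA] q pi0 i0j0 by auto
      then show False using q pC by simp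
    next
      assume "{p,q} \<in> EA {}"
      then have "{p,q} = {mn,mx} \<or> (\<exists>i j. {p,q} = {i,j} \<and> consec UNIV i j)"
        using EA_empty_mem by blast
      then have cpq: "consec UNIV p q" using False q(1) mm
        by (auto simp: doubleton_eq_iff consec_def dest: less_asym)
      have "{p,q} \<notin> EA A"
      proof
        assume "{p,q} \<in> EA A"
        then have "q = j0" using F2[OF A False \<open>p \<noteq> mx\<close> _ pA] q pi0 i0j0 by auto
        then show False using q pC by simp
      qed
      then have "p \<in> D" unfolding D_def using cpq q by auto
      then show False using minD pi0 by fastforce
    qed
  qed
qed

lemma sub_eq:
  fixes A C :: "'n set"
  assumes A: "A \<subseteq> UNIV - {mn,mx}" and C: "C \<subseteq> UNIV - {mn,mx}" and sub: "EA C \<subseteq> EA A"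
  shows "EA C = EA A"
proof
  show "EA A \<subseteq> EA C"
  proof
    fix e assume e: "e \<in> EA A"
    then obtain u v where uv: "e = {u,v}" "u < v" by (rule EA_edge)
    have "u \<noteq> mx" "v \<noteq> mn" using uv lt1 lt2 mn_le mx_ge by (metis not_le)+
    show "e \<in> EA C"
    proof (cases "v = mx")
      case False
      obtain a where a: "a < v" "{a,v} \<in> EA C" using F3[OF C \<open>v \<noteq> mn\<close>] by auto
      then have "a = u" using F1[OF A \<open>v \<noteq> mn\<close> False] sub e uv by auto
      then show ?thesis using a uv by simp
    next
      case vmx: True
      show ?thesis
      proof (cases "u = mn")
        case False
        obtain a where a: "u < a" "{u,a} \<in> EA C" using F3'[OF C \<open>u \<noteq> mx\<close>] by auto
        then have "a = v" using F2[OF A False \<open>u \<noteq> mx\<close>] sub e uv by auto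
        then show ?thesis using a uv by simp
      next
        case True
        obtain y1 y2 where y: "y1 \<noteq> y2" "y1 < mx" "y2 < mx" "{y1,mx} \<in> EA C" "{y2,mx} \<in> EA C"
          using F4'[OF C] by blast
        have c1: "consec (A \<union> {mn,mx}) y1 mx \<or> consec (- A) y1 mx" using mem_EA y sub by blast
        have c2: "consec (A \<union> {mn,mx}) y2 mx \<or> consec (- A) y2 mx" using mem_EA y sub by blast
        have c0: "consec (A \<union> {mn,mx}) mn mx \<or> consec (- A) mn mx" using mem_EA e uv True vmx by blast
        have "y1 = mn \<or> y2 = mn" using c0 c1 c2 y(1) consec_lower_uniq by metis
        then show ?thesis using y uv True vmx by (auto simp: insert_commute)
      qed
    qed
  qed
qed (rule sub)

lemma hub:
  fixes A C :: "'n set"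
  assumes A: "A \<subseteq> UNIV - {mn,mx}" and C: "C \<subseteq> UNIV - {mn,mx}"
    and lo: "EA A \<inter> EA {} \<subseteq> EA C" and hi: "EA C \<subseteq> EA A \<union> EA {}"
  shows "EA C = EA A \<or> EA C = EA {}"
proof (cases "{mn,mx} \<in> EA C")
  case True then show ?thesis using EA_top[OF C] by simp
next
  case False then show ?thesis using hub_sub[OF A C lo hi] sub_eq[OF A C] by simp
qed

end

lemma edge_face:
  fixes S :: "'a::euclidean_space set" and c :: 'a
  assumes fin: "finite S" and uv: "u \<in> S" "v \<in> S" "u \<noteq> v"
    and le: "\<forall>s\<in>S. c \<bullet> s \<le> \<mu>" and eq: "c \<bullet> u = \<mu>" "c \<bullet> v = \<mu>"
    and uniq: "\<forall>s\<in>S. c \<bullet> s = \<mu> \<longrightarrow> s = u \<or> s = v"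
  shows "u extreme_point_of convex hull S \<and> v extreme_point_of convex hull S \<and>
         (\<exists>F. F face_of convex hull S \<and> aff_dim F = 1 \<and> u \<in> F \<and> v \<in> F)"
proof -
  let ?P = "convex hull S"
  have Ple: "\<forall>y\<in>?P. c \<bullet> y \<le> \<mu>"
  proof -
    have "?P \<subseteq> {y. c \<bullet> y \<le> \<mu>}"
      by (rule hull_minimal) (use le in \<open>auto simp: convex_halfspace_le\<close>)
    then show ?thesis by auto
  qed
  define F where "F = ?P \<inter> {y. c \<bullet> y = \<mu>}"
  have face: "F face_of ?P" unfolding F_def
    by (rule face_of_Int_supporting_hyperplane_le) (simp_all add: Ple)
  obtain S' where S': "S' \<subseteq> S" "F = convex hull S'"
    by (rule face_of_convex_hull_subset[OF finite_imp_compact[OF fin] face])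
  have "S' \<subseteq> F" using S'(2) hull_subset[of S' convex] by simp
  then have "S' \<subseteq> {u,v}" using S'(1) uniq unfolding F_def by blast
  then have F1: "F \<subseteq> convex hull {u,v}" unfolding S'(2) by (rule hull_mono)
  have uvF: "{u,v} \<subseteq> F" unfolding F_def using uv eq hull_subset[of S convex] by auto
  have "convex F" using face_of_imp_convex[OF face] .
  then have "convex hull {u,v} \<subseteq> F" using uvF by (simp add: hull_minimal)
  then have Feq: "F = closed_segment u v" using F1 by (simp add: segment_convex_hull)
  have "aff_dim F = 1" using Feq uv(3) by (simp add: segment_convex_hull aff_dim_convex_hull)
  moreover have "u extreme_point_of ?P" "v extreme_point_of ?P"
    using extreme_point_of_face[OF face] extreme_point_of_segment Feq uvF by auto
  ultimately show ?thesis using uvF face by (intro conjI exI[of _ F]) auto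
qed

lemma nonadj:
  fixes u v w z :: "'a::euclidean_space"
  assumes ext: "u extreme_point_of P" "v extreme_point_of P" "w extreme_point_of P"
    and zP: "z \<in> P"
    and d: "u \<noteq> v" "w \<noteq> u" "w \<noteq> v" "w \<noteq> z" and sum: "u + v = w + z"
    and F: "F face_of P" "aff_dim F = 1" and uF: "u \<in> F" and vF: "v \<in> F"
  shows False
proof -
  have wP: "w \<in> P" "u \<in> P" "v \<in> P" using ext by (simp_all add: extreme_point_of_def)
  have cF: "convex F" using face_of_imp_convex[OF F(1)] .
  have "closed_segment u v \<subseteq> F" using cF uF vF unfolding convex_contains_segment by blast
  then have m1: "midpoint u v \<in> F" using midpoint_in_closed_segment[of u v] by blast
  have m2: "midpoint u v = midpoint w z" using sum unfolding midpoint_def by simp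
  have m3: "midpoint w z \<in> open_segment w z" using midpoint_in_open_segment[of w z] d(4) by blast
  have "w \<in> F" using face_ofD[OF F(1) m3 wP(1) zP] m1 m2 by simp
  have "collinear F" by (simp add: collinear_aff_dim F(2))
  moreover have "{u,v,w} \<subseteq> F" using uF vF \<open>w \<in> F\<close> by simp
  ultimately have "collinear {u,v,w}" by (rule collinear_subset)
  then have "between (v,w) u \<or> between (w,u) v \<or> between (u,v) w"
    by (simp only: collinear_between_cases)
  then show False
  proof (elim disjE)
    assume "between (v,w) u"
    then have "u \<in> closed_segment v w" by (simp only: between_mem_segment)
    then have "u \<in> open_segment v w" using d unfolding open_segment_def by simp
    then show False using ext(1) wP unfolding extreme_point_of_def by blast
  next
    assume "between (w,u) v"
    then have "v \<in> closed_segment w u" by (simp only: between_mem_segment)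
    then have "v \<in> open_segment w u" using d unfolding open_segment_def by simp
    then show False using ext(2) wP unfolding extreme_point_of_def by blast
  next
    assume "between (u,v) w"
    then have "w \<in> closed_segment u v" by (simp only: between_mem_segment)
    then have "w \<in> open_segment u v" using d unfolding open_segment_def by simp
    then show False using ext(3) wP unfolding extreme_point_of_def by blast
  qed
qed

definition cf :: "'n::{finite,linorder} set set \<Rightarrow> 'n set set \<Rightarrow> real^('n\<times>'n)" where
  "cf X Y = (\<chi> p. if {fst p, snd p} \<in> X \<inter> Y then 1 else if {fst p, snd p} \<in> X \<union> Y then 0 else -1)"

definition dbl :: "'a set set \<Rightarrow> bool" where "dbl X \<longleftrightarrow> (\<forall>e\<in>X. \<exists>a b. e = {a,b})"

lemma cf_inner: "cf X Y \<bullet> char_vec W =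
   (\<Sum>p\<in>UNIV. (if {fst p, snd p} \<in> X \<inter> Y then 1 else if {fst p, snd p} \<in> X \<union> Y then 0 else -1)
      * (if {fst p, snd p} \<in> W then 1 else 0))"
  unfolding inner_vec_def cf_def char_vec_def by simp

lemma cf_X: "cf X Y \<bullet> char_vec X = (\<Sum>p\<in>UNIV. if {fst p, snd p} \<in> X \<inter> Y then 1 else 0)"
  unfolding cf_inner by (rule sum.cong) auto

lemma cf_sym: "cf X Y = cf Y X"
  unfolding cf_def by (simp only: Int_commute[of X Y] Un_commute[of X Y])

lemma cf_le:
  fixes X Y W :: "'n::{finite,linorder} set set"
  shows "cf X Y \<bullet> char_vec W \<le> cf X Y \<bullet> char_vec X"
    and "dbl X \<Longrightarrow> dbl W \<Longrightarrow> cf X Y \<bullet> char_vec W = cf X Y \<bullet> char_vec X \<Longrightarrow> X \<inter> Y \<subseteq> W \<and> W \<subseteq> X \<union> Y"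
proof -
  define f where "f p = (if {fst p, snd p} \<in> X \<inter> Y then 1 else if {fst p, snd p} \<in> X \<union> Y then 0 else -1)
      * (if {fst p, snd p} \<in> W then 1 else (0::real))" for p :: "'n \<times> 'n"
  define g where "g p = (if {fst p, snd p} \<in> X \<inter> Y then 1 else (0::real))" for p :: "'n \<times> 'n"
  have fg: "f p \<le> g p" for p unfolding f_def g_def by auto
  have eW: "cf X Y \<bullet> char_vec W = sum f UNIV" unfolding cf_inner f_def ..
  have eX: "cf X Y \<bullet> char_vec X = sum g UNIV" unfolding cf_X g_def ..
  show "cf X Y \<bullet> char_vec W \<le> cf X Y \<bullet> char_vec X" unfolding eW eX by (rule sum_mono) (rule fg)
  assume dX: "dbl X" and dW: "dbl W" and eq: "cf X Y \<bullet> char_vec W = cf X Y \<bullet> char_vec X"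
  have "sum (\<lambda>p. g p - f p) UNIV = 0" using eq unfolding eW eX by (simp add: sum_subtractf)
  then have "\<forall>p\<in>UNIV. g p - f p = 0" using fg by (subst sum_nonneg_eq_0_iff[symmetric]) auto
  then have fgp: "f p = g p" for p by (cases p) auto
  show "X \<inter> Y \<subseteq> W \<and> W \<subseteq> X \<union> Y"
  proof
    show "X \<inter> Y \<subseteq> W"
    proof
      fix e assume e: "e \<in> X \<inter> Y"
      then obtain a b where ab: "e = {a,b}" using dX unfolding dbl_def by auto
      show "e \<in> W" using fgp[of "(a,b)"] e ab unfolding f_def g_def by (auto split: if_splits)
    qed
    show "W \<subseteq> X \<union> Y"
    proof
      fix e assume e: "e \<in> W"
      then obtain a b where ab: "e = {a,b}" using dW unfolding dbl_def by auto
      show "e \<in> X \<union> Y" using fgp[of "(a,b)"] e ab unfolding f_def g_def by (auto split: if_splits)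
    qed
  qed
qed

lemma char_inj:
  fixes X Y :: "'n::{finite,linorder} set set"
  assumes "dbl X" "dbl Y" "char_vec X = char_vec Y" shows "X = Y"
proof -
  have "e \<in> Y" if ee: "e \<in> X" for e
  proof -
    obtain a b where "e = {a,b}" using assms(1) ee unfolding dbl_def by auto
    then show ?thesis using arg_cong[OF assms(3), of "\<lambda>v. v $ (a,b)"] ee
      unfolding char_vec_def by (auto split: if_splits)
  qed
  moreover have "e \<in> X" if ee: "e \<in> Y" for e
  proof -
    obtain a b where "e = {a,b}" using assms(2) ee unfolding dbl_def by auto
    then show ?thesis using arg_cong[OF assms(3), of "\<lambda>v. v $ (a,b)"] ee
      unfolding char_vec_def by (auto split: if_splits)
  qed
  ultimately show ?thesis by auto
qed

lemma char_add: "char_vec X + char_vec Y = char_vec (X \<inter> Y) + char_vec (X \<union> Y)"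
  unfolding char_vec_def by (rule vec_eq_iff[THEN iffD2]) auto

lemma dbl_EA: "dbl (EA A)"
  unfolding dbl_def by (metis EA_edge)

context pyr begin

lemma adj_hub:
  fixes A :: "'n set"
  assumes A: "A \<subseteq> UNIV - {mn,mx}" and ne: "EA A \<noteq> EA {}"
  shows "char_vec (EA A) extreme_point_of (PYR :: (real^('n\<times>'n)) set) \<and>
         char_vec (EA {}) extreme_point_of (PYR :: (real^('n\<times>'n)) set) \<and>
         (\<exists>F. F face_of (PYR :: (real^('n\<times>'n)) set) \<and> aff_dim F = 1 \<and>
              char_vec (EA A) \<in> F \<and> char_vec (EA ({}::'n set)) \<in> F)"
proof -
  let ?S = "char_vec ` (pyramidal_tours :: 'n set set set)"
  let ?c = "cf (EA A) (EA {})"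
  let ?\<mu> = "?c \<bullet> char_vec (EA A)"
  have T: "(pyramidal_tours :: 'n set set set) = EA ` {A. A \<subseteq> UNIV - {mn, mx}}" using tours_eq mm .
  have fin: "finite ?S" by simp
  have uS: "char_vec (EA A) \<in> ?S" using T A by auto
  have vS: "char_vec (EA {}) \<in> ?S" using T by auto
  have uv: "char_vec (EA A) \<noteq> char_vec (EA {})" using char_inj dbl_EA ne by metis
  have le: "\<forall>s\<in>?S. ?c \<bullet> s \<le> ?\<mu>" using cf_le(1) by auto
  have ev: "?c \<bullet> char_vec (EA {}) = ?\<mu>"
    using cf_X[of "EA A" "EA {}"] cf_X[of "EA {}" "EA A"] cf_sym[of "EA A" "EA {}"]
    by (simp add: Int_commute)
  have uniq: "\<forall>s\<in>?S. ?c \<bullet> s = ?\<mu> \<longrightarrow> s = char_vec (EA A) \<or> s = char_vec (EA {})"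
  proof (intro ballI impI)
    fix s assume "s \<in> ?S" and eq: "?c \<bullet> s = ?\<mu>"
    then obtain C where C: "C \<subseteq> UNIV - {mn,mx}" "s = char_vec (EA C)" unfolding T by auto
    have "EA A \<inter> EA {} \<subseteq> EA C \<and> EA C \<subseteq> EA A \<union> EA {}"
      using cf_le(2)[OF dbl_EA dbl_EA, of A "EA {}" C] eq C by simp
    then have "EA C = EA A \<or> EA C = EA {}" using hub[OF A C(1)] by auto
    then show "s = char_vec (EA A) \<or> s = char_vec (EA {})" using C by auto
  qed
  show ?thesis using edge_face[OF fin uS vS uv le refl ev uniq] unfolding PYR_def by simp
qed

end

lemma pe_sub: "e \<in> pe xs \<Longrightarrow> e \<subseteq> set xs"
  by (induction xs rule: pe.induct) auto

lemma cedges_list: "sorted_wrt (<) xs \<Longrightarrow> S = set xs \<Longrightarrow> cedges S = pe xs"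
  using pe_sorted by metis

locale pyr6 =
  fixes m a b c d :: "'n::{finite,linorder}" and R :: "'n list"
  assumes L: "sorted_list_of_set (UNIV::'n set) = m#a#b#c#d#R" and Rne: "R \<noteq> []"
begin

lemma sw: "sorted_wrt (<) (m#a#b#c#d#R)"
  using strict_sorted_list_of_set[of "UNIV::'n set"] L by simp

lemma setL: "set (m#a#b#c#d#R) = UNIV"
  using set_sorted_list_of_set[of "UNIV::'n set"] L by simp

lemma ord: "m < a" "a < b" "b < c" "c < d" "\<forall>r\<in>set R. d < r"
  using sw by auto

lemma m_mn: "m = mn"
proof -
  have "\<forall>y. m \<le> y"
  proof
    fix y :: 'n
    have "y \<in> set (m#a#b#c#d#R)" using setL by simp
    then show "m \<le> y" using sw by (auto simp: order.strict_implies_order)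
  qed
  then show ?thesis by (metis Min_eqI UNIV_I finite)
qed

lemma mx_R: "mx \<in> set R" "d < mx"
proof -
  obtain r where r: "r \<in> set R" using Rne by (cases R) auto
  then have "d < r" using ord by auto
  also have "r \<le> mx" by simp
  finally have dm: "d < mx" .
  have "mx \<in> set (m#a#b#c#d#R)" using setL by simp
  then show "mx \<in> set R" using dm ord by auto
  show "d < mx" by fact
qed

lemma three: "\<exists>t::'n. mn < t \<and> t < mx"
  using ord mx_R m_mn by (intro exI[of _ a]) auto

sublocale pyr "undefined::'n" by unfold_locales (rule three)

lemma inner: "{a,b,c} \<subseteq> UNIV - {mn,mx}"
  using ord mx_R m_mn by auto

abbreviation "Q \<equiv> pe (d#R)"

lemma Q_not: "e \<in> Q \<Longrightarrow> m \<notin> e \<and> a \<notin> e \<and> b \<notin> e \<and> c \<notin> e"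
  using pe_sub[of e "d#R"] sw by auto

lemma dR: "\<forall>r\<in>set R. m < r \<and> a < r \<and> b < r \<and> c < r"
  using ord by (meson order.strict_trans)

lemma EAu: "EA {b} = {{m,b},{b,mx},{m,a},{a,c},{c,d}} \<union> Q"
proof -
  have 1: "cedges ({b} \<union> {mn,mx}) = pe [m,b,mx]"
    by (rule cedges_list) (use ord mx_R m_mn in auto)
  have 2: "cedges (- {b}) = pe (m#a#c#d#R)"
    by (rule cedges_list) (use sw setL in \<open>auto simp: dR\<close>)
  show ?thesis unfolding EA_def 1 2 by auto
qed

lemma EAv: "EA {c} = {{m,c},{c,mx},{m,a},{a,b},{b,d}} \<union> Q"
proof -
  have 1: "cedges ({c} \<union> {mn,mx}) = pe [m,c,mx]"
    by (rule cedges_list) (use ord mx_R m_mn in auto)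
  have 2: "cedges (- {c}) = pe (m#a#b#d#R)"
    by (rule cedges_list) (use sw setL in \<open>auto simp: dR\<close>)
  show ?thesis unfolding EA_def 1 2 by auto
qed

lemma EAw: "EA {a,b} = {{m,a},{a,b},{b,mx},{m,c},{c,d}} \<union> Q"
proof -
  have 1: "cedges ({a,b} \<union> {mn,mx}) = pe [m,a,b,mx]"
    by (rule cedges_list) (use ord mx_R m_mn in auto)
  have 2: "cedges (- {a,b}) = pe (m#c#d#R)"
    by (rule cedges_list) (use sw setL in \<open>auto simp: dR\<close>)
  show ?thesis unfolding EA_def 1 2 by auto
qed

lemma EAz: "EA {a,c} = {{m,a},{a,c},{c,mx},{m,b},{b,d}} \<union> Q"
proof -
  have 1: "cedges ({a,c} \<union> {mn,mx}) = pe [m,a,c,mx]"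
    by (rule cedges_list) (use ord mx_R m_mn in auto)
  have 2: "cedges (- {a,c}) = pe (m#b#d#R)"
    by (rule cedges_list) (use sw setL in \<open>auto simp: dR\<close>)
  show ?thesis unfolding EA_def 1 2 by auto
qed

lemma neqs: "m \<noteq> a" "m \<noteq> b" "m \<noteq> c" "m \<noteq> d" "m \<noteq> mx" "a \<noteq> b" "a \<noteq> c" "a \<noteq> d" "a \<noteq> mx"
  "b \<noteq> c" "b \<noteq> d" "b \<noteq> mx" "c \<noteq> d" "c \<noteq> mx" "d \<noteq> mx"
  using ord mx_R by (meson order.strict_trans less_irrefl)+

lemma inter_eq: "EA {b} \<inter> EA {c} = EA {a,b} \<inter> EA {a,c}"
proof -
  have 1: "{{m,b},{b,mx},{m,a},{a,c},{c,d}} \<inter> {{m,c},{c,mx},{m,a},{a,b},{b,d}} = {{m,a}}"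
    using neqs neqs[symmetric] by (auto simp: doubleton_eq_iff)
  have 2: "{{m,a},{a,b},{b,mx},{m,c},{c,d}} \<inter> {{m,a},{a,c},{c,mx},{m,b},{b,d}} = {{m,a}}"
    using neqs neqs[symmetric] by (auto simp: doubleton_eq_iff)
  show ?thesis unfolding EAu EAv EAw EAz Un_Int_distrib2[symmetric] 1 2 ..
qed

lemma union_eq: "EA {b} \<union> EA {c} = EA {a,b} \<union> EA {a,c}"
  unfolding EAu EAv EAw EAz by auto

lemma QQ: "{c,d} \<notin> Q" "{a,b} \<notin> Q" using Q_not by blast+

lemma dist_facts: "{c,d} \<in> EA {b}" "{c,d} \<notin> EA {c}" "{a,b} \<in> EA {a,b}" "{a,b} \<notin> EA {b}"
  "{c,d} \<in> EA {a,b}" "{c,d} \<notin> EA {a,c}"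
  unfolding EAu EAv EAw EAz using QQ neqs neqs[symmetric] by (simp_all add: doubleton_eq_iff)

end

lemma skel_adj_sym: "skel_adj P x y \<Longrightarrow> skel_adj P y x"
  unfolding skel_adj_def by blast

context pyr6 begin

abbreviation P :: "(real^('n\<times>'n)) set" where "P \<equiv> PYR"

lemma T: "(pyramidal_tours :: 'n set set set) = EA ` {A. A \<subseteq> UNIV - {mn, mx}}"
  using tours_eq mm .

lemma H_ext: "char_vec (EA ({}::'n set)) extreme_point_of P"
proof -
  have bI: "{b} \<subseteq> UNIV - {mn,mx}" and cI: "{c} \<subseteq> UNIV - {mn,mx}" using inner by auto
  have "EA {b} \<noteq> EA {c}" using dist_facts by auto
  then have "EA {b} \<noteq> EA {} \<or> EA {c} \<noteq> EA {}" by auto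
  then show ?thesis
  proof
    assume "EA {b} \<noteq> EA {}" then show ?thesis using adj_hub[OF bI] by simp
  next
    assume "EA {c} \<noteq> EA {}" then show ?thesis using adj_hub[OF cI] by simp
  qed
qed

lemma all_ext: "A \<subseteq> UNIV - {mn,mx} \<Longrightarrow> char_vec (EA A) extreme_point_of P"
  using adj_hub H_ext by (cases "EA A = EA {}") auto

lemma V_eq: "skel_vertices P = char_vec ` pyramidal_tours"
proof
  show "skel_vertices P \<subseteq> char_vec ` pyramidal_tours"
    unfolding skel_vertices_def PYR_def using extreme_point_of_convex_hull by blast
  show "char_vec ` pyramidal_tours \<subseteq> skel_vertices P"
    unfolding skel_vertices_def T using all_ext by auto
qed

abbreviation h :: "real^('n\<times>'n)" where "h \<equiv> char_vec (EA ({}::'n set))"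

lemma hV: "h \<in> skel_vertices P" unfolding skel_vertices_def using H_ext by simp

lemma adjH: "x \<in> skel_vertices P \<Longrightarrow> x \<noteq> h \<Longrightarrow> skel_adj P x h"
proof -
  assume x: "x \<in> skel_vertices P" "x \<noteq> h"
  then obtain A where A: "A \<subseteq> UNIV - {mn,mx}" "x = char_vec (EA A)" unfolding V_eq T by auto
  then have "EA A \<noteq> EA {}" using x by auto
  then have X: "char_vec (EA A) extreme_point_of P \<and>
         (\<exists>F. F face_of P \<and> aff_dim F = 1 \<and> char_vec (EA A) \<in> F \<and> h \<in> F)"
    using adj_hub[OF A(1)] by simp
  then obtain F where "F face_of P" "aff_dim F = 1" "x \<in> F" "h \<in> F" using A(2) by blast
  then show ?thesis unfolding skel_adj_def using x hV by blast
qed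

lemma u0v0: "char_vec (EA {b}) \<in> skel_vertices P" "char_vec (EA {c}) \<in> skel_vertices P"
  "char_vec (EA {b}) \<noteq> (char_vec (EA {c}) :: real^('n\<times>'n))"
  "\<not> skel_adj P (char_vec (EA {b})) (char_vec (EA {c}))"
proof -
  have bI: "{b} \<subseteq> UNIV - {mn,mx}" and cI: "{c} \<subseteq> UNIV - {mn,mx}"
    and abI: "{a,b} \<subseteq> UNIV - {mn,mx}" and acI: "{a,c} \<subseteq> UNIV - {mn,mx}" using inner by auto
  show "char_vec (EA {b}) \<in> skel_vertices P" "char_vec (EA {c}) \<in> skel_vertices P"
    unfolding skel_vertices_def using all_ext bI cI by auto
  have neq: "\<And>X Y. EA X \<noteq> EA Y \<Longrightarrow> char_vec (EA X) \<noteq> (char_vec (EA Y) :: real^('n\<times>'n))"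
    using char_inj[OF dbl_EA dbl_EA] by blast
  have d1: "EA {b} \<noteq> EA {c}" "EA {a,b} \<noteq> EA {b}" "EA {a,b} \<noteq> EA {c}" "EA {a,b} \<noteq> EA {a,c}"
    using dist_facts by auto
  show "char_vec (EA {b}) \<noteq> (char_vec (EA {c}) :: real^('n\<times>'n))" using neq[OF d1(1)] .
  show "\<not> skel_adj P (char_vec (EA {b})) (char_vec (EA {c}))"
  proof
    assume "skel_adj P (char_vec (EA {b})) (char_vec (EA {c}))"
    then obtain F where F: "F face_of P" "aff_dim F = 1" "char_vec (EA {b}) \<in> F" "char_vec (EA {c}) \<in> F"
      unfolding skel_adj_def by blast
    have "char_vec (EA {a,c}) \<in> char_vec ` (pyramidal_tours :: 'n set set set)"
      unfolding T using acI by blast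
    then have zP: "char_vec (EA {a,c}) \<in> P" unfolding PYR_def by (rule hull_inc)
    have sum: "char_vec (EA {b}) + char_vec (EA {c}) = char_vec (EA {a,b}) + (char_vec (EA {a,c}) :: real^('n\<times>'n))"
      unfolding char_add[of "EA {b}" "EA {c}"] char_add[of "EA {a,b}" "EA {a,c}"] inter_eq union_eq ..
    have n1: "char_vec (EA {b}) \<noteq> (char_vec (EA {c}) :: real^('n\<times>'n))" using neq[OF d1(1)] .
    have n2: "char_vec (EA {a,b}) \<noteq> (char_vec (EA {b}) :: real^('n\<times>'n))" using neq[OF d1(2)] .
    have n3: "char_vec (EA {a,b}) \<noteq> (char_vec (EA {c}) :: real^('n\<times>'n))" using neq[OF d1(3)] .
    have n4: "char_vec (EA {a,b}) \<noteq> (char_vec (EA {a,c}) :: real^('n\<times>'n))" using neq[OF d1(4)] .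
    show False
      by (rule nonadj[OF all_ext[OF bI] all_ext[OF cI] all_ext[OF abI] zP n1 n2 n3 n4 sum F])
  qed
qed

lemma dist_le2:
  assumes u: "u \<in> skel_vertices P" and v: "v \<in> skel_vertices P"
  shows "graph_dist (skel_vertices P) (skel_adj P) u v \<le> 2"
proof -
  let ?V = "skel_vertices P"
  let ?K = "{k. \<exists>p. length p = Suc k \<and> hd p = u \<and> last p = v \<and> set p \<subseteq> ?V \<and> (\<forall>i<k. skel_adj P (p ! i) (p ! Suc i))}"
  have "\<exists>k\<in>?K. k \<le> 2"
  proof (cases "u = v")
    case True
    then have "0 \<in> ?K" using u by (intro CollectI exI[of _ "[u]"]) auto
    then show ?thesis by auto
  next
    case False
    show ?thesis
    proof (cases "u = h \<or> v = h")
      case True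
      then have "skel_adj P u v"
      proof
        assume "u = h" then show ?thesis using adjH[OF v] False skel_adj_sym by auto
      next
        assume "v = h" then show ?thesis using adjH[OF u] False by auto
      qed
      then have "1 \<in> ?K" using u v by (intro CollectI exI[of _ "[u,v]"]) auto
      then show ?thesis by auto
    next
      case nh: False
      have "skel_adj P u h" "skel_adj P h v" using adjH u v nh skel_adj_sym by auto
      then have "2 \<in> ?K" using u v hV
        by (intro CollectI exI[of _ "[u,h,v]"]) (auto simp: less_Suc_eq numeral_2_eq_2)
      then show ?thesis by (rule bexI[rotated]) simp
    qed
  qed
  then obtain k where k: "k \<in> ?K" "k \<le> 2" by blast
  have "graph_dist ?V (skel_adj P) u v \<le> enat k"
    unfolding graph_dist_def by (rule INF_lower) (use k in auto)
  also have "\<dots> \<le> 2" using k(2) by (simp add: numeral_eq_enat)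
  finally show ?thesis .
qed

lemma dist_ge2:
  assumes ne: "u \<noteq> v" and na: "\<not> skel_adj P u v"
  shows "2 \<le> graph_dist (skel_vertices P) (skel_adj P) u v"
  unfolding graph_dist_def
proof (rule INF_greatest)
  fix k assume "k \<in> {k. \<exists>p. length p = Suc k \<and> hd p = u \<and> last p = v \<and> set p \<subseteq> skel_vertices P \<and>
      (\<forall>i<k. skel_adj P (p ! i) (p ! Suc i))}"
  then obtain p where p: "length p = Suc k" "hd p = u" "last p = v" "\<forall>i<k. skel_adj P (p ! i) (p ! Suc i)"
    by auto
  have "k \<noteq> 0"
  proof
    assume "k = 0"
    then have "hd p = last p" using p(1) by (cases p) auto
    then show False using p ne by simp
  qed
  moreover have "k \<noteq> 1"
  proof
    assume k1: "k = 1"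
    have pn: "p \<noteq> []" using p(1) by auto
    have "p ! 0 = u" using p(2) hd_conv_nth[OF pn] by simp
    moreover have "p ! 1 = v" using p(3) last_conv_nth[OF pn] p(1) k1 by simp
    ultimately have "p ! 0 = u" "p ! 1 = v" by auto
    then show False using p(4) k1 na by auto
  qed
  ultimately have "2 \<le> k" by auto
  then show "2 \<le> enat k" by (simp add: numeral_2_eq_2)
qed

lemma diam: "graph_diameter (skel_vertices P) (skel_adj P) = 2"
proof (rule antisym)
  show "graph_diameter (skel_vertices P) (skel_adj P) \<le> 2"
    unfolding graph_diameter_def by (intro SUP_least) (rule dist_le2)
  let ?u = "char_vec (EA {b}) :: real^('n\<times>'n)"
  let ?v = "char_vec (EA {c}) :: real^('n\<times>'n)"
  have "2 \<le> graph_dist (skel_vertices P) (skel_adj P) ?u ?v" using dist_ge2 u0v0 by blast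
  also have "\<dots> \<le> (SUP v\<in>skel_vertices P. graph_dist (skel_vertices P) (skel_adj P) ?u v)"
    by (rule SUP_upper) (rule u0v0)
  also have "\<dots> \<le> graph_diameter (skel_vertices P) (skel_adj P)"
    unfolding graph_diameter_def by (rule SUP_upper) (rule u0v0)
  finally show "2 \<le> graph_diameter (skel_vertices P) (skel_adj P)" .
qed

end

theorem theorem5:
  assumes "CARD('n::{finite,linorder}) \<ge> 6"
  shows "graph_diameter (skel_vertices (PYR :: (real ^ ('n \<times> 'n)) set))
           (skel_adj (PYR :: (real ^ ('n \<times> 'n)) set)) = 2"
proof -
  have step: "\<And>n (xs::'n list). length xs \<ge> Suc n \<Longrightarrow> \<exists>y ys. xs = y#ys \<and> length ys \<ge> n"
    by (case_tac xs) auto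
  have "length (sorted_list_of_set (UNIV::'n set)) \<ge> Suc (Suc (Suc (Suc (Suc (Suc 0)))))" using assms by simp
  then obtain m t1 where 1: "sorted_list_of_set (UNIV::'n set) = m#t1" "length t1 \<ge> Suc (Suc (Suc (Suc (Suc 0))))"
    using step by blast
  then obtain a t2 where 2: "t1 = a#t2" "length t2 \<ge> Suc (Suc (Suc (Suc 0)))" using step by blast
  then obtain b t3 where 3: "t2 = b#t3" "length t3 \<ge> Suc (Suc (Suc 0))" using step by blast
  then obtain c t4 where 4: "t3 = c#t4" "length t4 \<ge> Suc (Suc 0)" using step by blast
  then obtain d t5 where 5: "t4 = d#t5" "length t5 \<ge> Suc 0" using step by blast
  then obtain r R where 6: "t5 = r#R" using step by blast
  have L: "sorted_list_of_set (UNIV::'n set) = m#a#b#c#d#r#R" using 1 2 3 4 5 6 by simp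
  interpret pyr6 m a b c d "r#R" by unfold_locales (use L in auto)
  show ?thesis by (rule diam)
qed

end
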